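(* Let $m_1,\ldots,m_s$ be positive integers. Put $a_1=(m_1,\ldots,m_s)$, $a_k=[m_{k-1},(m_k,\ldots,m_s)]$ for $k=2,\ldots,s-1$, and $a_s=[m_{s-1},m_s]$ (when $s\ge2$). Then $$\mathbb{Z}_{m_1}\times\cdots\times\mathbb{Z}_{m_s}\cong\mathbb{Z}_{a_1}\times\cdots\times\mathbb{Z}_{a_s}.$$
   Context: $\mathbb{Z}_m$ denotes a cyclic group of order $m$; $(\cdot,\ldots,\cdot)$ and $[\cdot,\ldots,\cdot]$ denote gcd and lcm. *)

theory Defs
  imports "HOL-Algebra.Algebra"
begin

definition a_seq :: "(nat \<Rightarrow> nat) \<Rightarrow> nat \<Rightarrow> nat \<Rightarrow> nat" where
  "a_seq m s k =
     (if k = 1 then Gcd (m ` {1..s})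
      else if k = s then lcm (m (s - 1)) (m s)
      else lcm (m (k - 1)) (Gcd (m ` {k..s})))"

end

theory Submission
  imports Defs "HOL-Computational_Algebra.Primes"
begin


lemma crt_iso:
  fixes a b :: nat
  assumes "a > 0" "b > 0" "coprime a b"
  shows "integer_mod_group (a*b) \<cong> integer_mod_group a \<times>\<times> integer_mod_group b"
proof -
  let ?f = "\<lambda>x::int. (x mod int a, x mod int b)"
  have ab: "a*b > 0" using assms by simp
  have hom: "?f \<in> hom (integer_mod_group (a*b)) (integer_mod_group a \<times>\<times> integer_mod_group b)"
  proof (rule homI)
    fix x assume "x \<in> carrier (integer_mod_group (a*b))"
    then show "?f x \<in> carrier (integer_mod_group a \<times>\<times> integer_mod_group b)"
      using assms by (simp add: carrier_integer_mod_group)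
  next
    fix x y
    have "(x + y) mod (int a * int b) mod int a = (x + y) mod int a"
      by (simp add: mod_mod_cancel)
    moreover have "(x + y) mod (int a * int b) mod int b = (x + y) mod int b"
      by (metis mod_mod_cancel dvd_triv_right)
    ultimately show "?f (x \<otimes>\<^bsub>integer_mod_group (a*b)\<^esub> y) =
       ?f x \<otimes>\<^bsub>integer_mod_group a \<times>\<times> integer_mod_group b\<^esub> ?f y"
      by (simp add: mod_add_eq)
  qed
  have inj: "inj_on ?f (carrier (integer_mod_group (a*b)))"
  proof (rule inj_onI)
    fix x y assume x: "x \<in> carrier (integer_mod_group (a*b))" and y: "y \<in> carrier (integer_mod_group (a*b))"
      and eq: "?f x = ?f y"
    have "int a dvd x - y" "int b dvd x - y" using eq by (auto simp: mod_eq_dvd_iff)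
    then have "int a * int b dvd x - y" using assms(3)
      by (simp add: divides_mult)
    then have "int (a*b) dvd x - y" by simp
    moreover have "0 \<le> x" "x < int (a*b)" "0 \<le> y" "y < int (a*b)"
      using x y ab by (auto simp: carrier_integer_mod_group)
    ultimately show "x = y"
      by (metis mod_eq_dvd_iff mod_pos_pos_trivial)
  qed
  have fin: "finite (carrier (integer_mod_group a \<times>\<times> integer_mod_group b))"
    using assms by (simp add: carrier_integer_mod_group)
  have card: "card (?f ` carrier (integer_mod_group (a*b))) = card (carrier (integer_mod_group a \<times>\<times> integer_mod_group b))"
    unfolding card_image[OF inj] using assms ab by (simp add: carrier_integer_mod_group card_cartesian_product flip: of_nat_mult)
  have sub: "?f ` carrier (integer_mod_group (a*b)) \<subseteq> carrier (integer_mod_group a \<times>\<times> integer_mod_group b)"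
    using hom by (auto simp: hom_def)
  have "?f ` carrier (integer_mod_group (a*b)) = carrier (integer_mod_group a \<times>\<times> integer_mod_group b)"
    using card_subset_eq[OF fin sub card] .
  then have "?f \<in> iso (integer_mod_group (a*b)) (integer_mod_group a \<times>\<times> integer_mod_group b)"
    using hom inj by (simp add: iso_def bij_betw_def)
  then show ?thesis by (rule is_isoI)
qed


lemma nat_eq_by_mult:
  fixes x y :: nat
  assumes "x > 0" "y > 0" "\<And>p. Factorial_Ring.prime p \<Longrightarrow> multiplicity p x = multiplicity p y"
  shows "x = y"
  using multiplicity_eq_imp_eq[of x y] assms by simp

lemma coprime_by_mult:
  fixes x y :: nat
  assumes "x > 0" "y > 0" "\<And>p. Factorial_Ring.prime p \<Longrightarrow> min (multiplicity p x) (multiplicity p y) = 0"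
  shows "coprime x y"
proof -
  have "gcd x y = 1"
    by (rule nat_eq_by_mult) (use assms in \<open>auto simp: multiplicity_gcd\<close>)
  then show ?thesis by (simp add: coprime_iff_gcd_eq_1)
qed

definition pp :: "nat \<Rightarrow> (nat \<Rightarrow> bool) \<Rightarrow> nat" where
  "pp x P = (\<Prod>p\<in>{p\<in>prime_factors x. P p}. p ^ multiplicity p x)"

lemma pp_pos: "pp x P > 0"
  unfolding pp_def by (intro prod_pos) (auto dest: in_prime_factors_imp_prime simp: prime_gt_0_nat)

lemma pp_mult:
  assumes "x > 0" "Factorial_Ring.prime q"
  shows "multiplicity q (pp x P) = (if P q then multiplicity q x else 0)"
proof -
  have "multiplicity q (pp x P) = (if q \<in> {p\<in>prime_factors x. P p} then multiplicity q x else 0)"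
    unfolding pp_def
    by (rule multiplicity_prod_prime_powers) (auto dest: in_prime_factors_imp_prime simp: assms)
  also have "\<dots> = (if P q then multiplicity q x else 0)"
    using assms by (auto simp: in_prime_factors_iff not_dvd_imp_multiplicity_0)
  finally show ?thesis .
qed

lemma mult_times:
  fixes x y :: nat
  assumes "x > 0" "y > 0" "Factorial_Ring.prime p"
  shows "multiplicity p (x*y) = multiplicity p x + multiplicity p y"
  using assms by (simp add: prime_elem_multiplicity_mult_distrib)

lemma decomp:
  fixes m n :: nat
  assumes m: "m > 0" and n: "n > 0"
  shows "\<exists>m1 m2 n1 n2. m = m1*m2 \<and> n = n1*n2 \<and> coprime m1 m2 \<and> coprime n1 n2
          \<and> coprime m1 n1 \<and> coprime m2 n2 \<and> m1*n1 = lcm m n \<and> m2*n2 = gcd m n"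
proof -
  define P where "P = (\<lambda>p. multiplicity p n \<le> multiplicity p m)"
  define m1 where "m1 = pp m P"
  define m2 where "m2 = pp m (\<lambda>p. \<not> P p)"
  define n1 where "n1 = pp n (\<lambda>p. \<not> P p)"
  define n2 where "n2 = pp n P"
  have pos: "m1 > 0" "m2 > 0" "n1 > 0" "n2 > 0"
    unfolding m1_def m2_def n1_def n2_def by (auto simp: pp_pos)
  have M: "multiplicity q m1 = (if P q then multiplicity q m else 0)"
          "multiplicity q m2 = (if P q then 0 else multiplicity q m)"
          "multiplicity q n1 = (if P q then 0 else multiplicity q n)"
          "multiplicity q n2 = (if P q then multiplicity q n else 0)" if "Factorial_Ring.prime q" for q
    unfolding m1_def m2_def n1_def n2_def using pp_mult that m n by auto
  have gl: "multiplicity q (gcd m n) = min (multiplicity q m) (multiplicity q n)"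
      "multiplicity q (lcm m n) = max (multiplicity q m) (multiplicity q n)" if "Factorial_Ring.prime q" for q
    using that m n by (auto simp: multiplicity_gcd multiplicity_lcm)
  have "m = m1*m2"
    by (rule nat_eq_by_mult) (use pos m in \<open>auto simp: mult_times M\<close>)
  moreover have "n = n1*n2"
    by (rule nat_eq_by_mult) (use pos n in \<open>auto simp: mult_times M\<close>)
  moreover have "m1*n1 = lcm m n"
    by (rule nat_eq_by_mult) (use pos m n in \<open>auto simp: mult_times M gl P_def lcm_pos_nat\<close>)
  moreover have "m2*n2 = gcd m n"
    by (rule nat_eq_by_mult) (use pos m n in \<open>auto simp: mult_times M gl P_def lcm_pos_nat\<close>)
  moreover have "coprime m1 m2" "coprime n1 n2" "coprime m1 n1" "coprime m2 n2"
    by (rule coprime_by_mult; use pos in \<open>auto simp: M\<close>)+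
  ultimately show ?thesis by blast
qed


lemma rearr_iso: "(A \<times>\<times> B) \<times>\<times> (C \<times>\<times> D) \<cong> (B \<times>\<times> C) \<times>\<times> (A \<times>\<times> D)"
proof (rule is_isoI)
  show "(\<lambda>((a,b),(c,d)). ((b,c),(a,d))) \<in> iso ((A \<times>\<times> B) \<times>\<times> (C \<times>\<times> D)) ((B \<times>\<times> C) \<times>\<times> (A \<times>\<times> D))"
    by (auto simp add: iso_def hom_def inj_on_def bij_betw_def image_def)
qed

lemma dp_iso: "G \<cong> G2 \<Longrightarrow> H \<cong> H2 \<Longrightarrow> group G \<Longrightarrow> G \<times>\<times> H \<cong> G2 \<times>\<times> H2"
  using group.DirProd_iso_trans by blast

lemma Zsym: "G \<cong> integer_mod_group n \<Longrightarrow> group G \<Longrightarrow> integer_mod_group n \<cong> G"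
  using group.iso_sym by blast

lemma gcd_lcm_iso:
  fixes m n :: nat
  assumes "m > 0" "n > 0"
  shows "integer_mod_group m \<times>\<times> integer_mod_group n \<cong> integer_mod_group (gcd m n) \<times>\<times> integer_mod_group (lcm m n)"
proof -
  obtain m1 m2 n1 n2 where d: "m = m1*m2" "n = n1*n2" "coprime m1 m2" "coprime n1 n2"
          "coprime m1 n1" "coprime m2 n2" "m1*n1 = lcm m n" "m2*n2 = gcd m n"
    using decomp[OF assms] by blast
  have pos: "m1 > 0" "m2 > 0" "n1 > 0" "n2 > 0" using d assms by auto
  let ?Z = integer_mod_group
  have "?Z m \<times>\<times> ?Z n \<cong> (?Z m1 \<times>\<times> ?Z m2) \<times>\<times> (?Z n2 \<times>\<times> ?Z n1)"
    apply (rule dp_iso)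
      apply (simp add: d crt_iso pos)
     apply (metis crt_iso d(2) d(4) pos(3,4) mult.commute coprime_commute)
    by simp
  also have "\<dots> \<cong> (?Z m2 \<times>\<times> ?Z n2) \<times>\<times> (?Z m1 \<times>\<times> ?Z n1)" by (rule rearr_iso)
  also have "\<dots> \<cong> ?Z (gcd m n) \<times>\<times> ?Z (lcm m n)"
  proof (rule dp_iso)
    have "?Z (m2*n2) \<cong> ?Z m2 \<times>\<times> ?Z n2" using crt_iso d pos by blast
    then show "?Z m2 \<times>\<times> ?Z n2 \<cong> ?Z (gcd m n)"
      using group.iso_sym[OF group_integer_mod_group] d by metis
    have "?Z (m1*n1) \<cong> ?Z m1 \<times>\<times> ?Z n1" using crt_iso d pos by blast
    then show "?Z m1 \<times>\<times> ?Z n1 \<cong> ?Z (lcm m n)"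
      using group.iso_sym[OF group_integer_mod_group] d by metis
  qed (simp add: DirProd_group)
  finally show ?thesis .
qed

lemma product_group_cong:
  assumes "\<And>i. i \<in> I \<Longrightarrow> G i = H i"
  shows "product_group I G = product_group I H"
proof -
  have "(\<lambda>x y. \<lambda>i\<in>I. x i \<otimes>\<^bsub>G i\<^esub> y i) = (\<lambda>x y. \<lambda>i\<in>I. x i \<otimes>\<^bsub>H i\<^esub> y i)"
    by (intro ext restrict_ext) (simp add: assms)
  moreover have "(\<lambda>i\<in>I. \<one>\<^bsub>G i\<^esub>) = (\<lambda>i\<in>I. \<one>\<^bsub>H i\<^esub>)"
    by (intro restrict_ext) (simp add: assms)
  moreover have "(\<Pi>\<^sub>E i\<in>I. carrier (G i)) = (\<Pi>\<^sub>E i\<in>I. carrier (H i))"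
    by (intro PiE_cong) (simp add: assms)
  ultimately show ?thesis unfolding product_group_def by simp
qed

lemma split_iso:
  assumes "i \<notin> I" "\<And>k. group (G k)"
  shows "product_group (insert i I) G \<cong> G i \<times>\<times> product_group I G"
proof (rule is_isoI)
  let ?f = "\<lambda>x. (x i, restrict x I)"
  have hom: "?f \<in> hom (product_group (insert i I) G) (G i \<times>\<times> product_group I G)"
  proof (rule homI)
    fix x assume "x \<in> carrier (product_group (insert i I) G)"
    then show "?f x \<in> carrier (G i \<times>\<times> product_group I G)"
      by (simp add: PiE_iff)
  next
    fix x y
    have "restrict (\<lambda>k\<in>insert i I. x k \<otimes>\<^bsub>G k\<^esub> y k) I = (\<lambda>k\<in>I. restrict x I k \<otimes>\<^bsub>G k\<^esub> restrict y I k)"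
      by (rule restrict_ext) simp
    then show "?f (x \<otimes>\<^bsub>product_group (insert i I) G\<^esub> y) = ?f x \<otimes>\<^bsub>G i \<times>\<times> product_group I G\<^esub> ?f y"
      by simp
  qed
  have inj: "inj_on ?f (carrier (product_group (insert i I) G))"
  proof (rule inj_onI)
    fix x y assume x: "x \<in> carrier (product_group (insert i I) G)"
      and y: "y \<in> carrier (product_group (insert i I) G)" and eq: "?f x = ?f y"
    have x': "x \<in> (\<Pi>\<^sub>E k\<in>insert i I. carrier (G k))" using x by (simp only: carrier_product_group)
    have y': "y \<in> (\<Pi>\<^sub>E k\<in>insert i I. carrier (G k))" using y by (simp only: carrier_product_group)
    have e1: "x i = y i" using eq by (rule Pair_inject)
    have e2: "restrict x I = restrict y I" using eq by (rule Pair_inject)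
    show "x = y"
    proof
      fix k
      show "x k = y k"
      proof (cases "k = i")
        case True then show ?thesis using e1 by simp
      next
        case False
        show ?thesis
        proof (cases "k \<in> I")
          case True
          then show ?thesis using fun_cong[OF e2, of k] by simp
        next
          case kI: False
          then have "k \<notin> insert i I" using False by simp
          then show ?thesis using PiE_arb[OF x'] PiE_arb[OF y'] by metis
        qed
      qed
    qed
  qed
  have sur: "?f ` carrier (product_group (insert i I) G) = carrier (G i \<times>\<times> product_group I G)"
  proof
    show "?f ` carrier (product_group (insert i I) G) \<subseteq> carrier (G i \<times>\<times> product_group I G)"
      using hom by (auto simp: hom_def)
  next
    show "carrier (G i \<times>\<times> product_group I G) \<subseteq> ?f ` carrier (product_group (insert i I) G)"
    proof (rule subsetI)
      fix p assume "p \<in> carrier (G i \<times>\<times> product_group I G)"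
      then obtain a y where p: "p = (a, y)" and a: "a \<in> carrier (G i)" and y: "y \<in> carrier (product_group I G)"
        by (metis SigmaE carrier_DirProd)
      have y': "y \<in> (\<Pi>\<^sub>E k\<in>I. carrier (G k))" using y by (simp only: carrier_product_group)
      have m1: "y(i := a) \<in> carrier (product_group (insert i I) G)"
        using PiE_fun_upd[OF a y'] by (simp only: carrier_product_group)
      have r: "restrict (y(i := a)) I = y"
      proof (rule ext)
        fix k show "restrict (y(i := a)) I k = y k"
        proof (cases "k \<in> I")
          case True
          then have "k \<noteq> i" using assms(1) by blast
          then show ?thesis using True by simp
        next
          case False
          then show ?thesis using PiE_arb[OF y' False] by simp
        qed
      qed
      show "p \<in> ?f ` carrier (product_group (insert i I) G)" unfolding p
      proof (rule rev_image_eqI[OF m1])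
        show "(a, y) = ?f (y(i := a))" using r by simp
      qed
    qed
  qed
  show "?f \<in> iso (product_group (insert i I) G) (G i \<times>\<times> product_group I G)"
    using hom inj sur by (simp add: iso_def bij_betw_def)
qed

definition cseq where "cseq m s j k = (if k = j then Gcd (m ` {j..s}) else a_seq m s k)"

lemma iso_refl': "G \<cong> G"
  by (rule is_isoI) (rule iso_set_refl)

lemma assoc_iso: "(A \<times>\<times> B) \<times>\<times> C \<cong> A \<times>\<times> (B \<times>\<times> C)"
proof (rule is_isoI)
  show "(\<lambda>((a,b),c). (a,(b,c))) \<in> iso ((A \<times>\<times> B) \<times>\<times> C) (A \<times>\<times> (B \<times>\<times> C))"
    by (auto simp add: iso_def hom_def inj_on_def bij_betw_def image_def)
qed

lemma assoc_iso': "group A \<Longrightarrow> group B \<Longrightarrow> group C \<Longrightarrow> A \<times>\<times> (B \<times>\<times> C) \<cong> (A \<times>\<times> B) \<times>\<times> C"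
  by (meson DirProd_group assoc_iso group.iso_sym)

lemma tail:
  assumes "d < s" "\<And>k. k \<in> {1..s} \<Longrightarrow> m k > 0"
  shows "product_group {s-d..s} (\<lambda>k. integer_mod_group (m k))
         \<cong> product_group {s-d..s} (\<lambda>k. integer_mod_group (cseq m s (s-d) k))"
  using assms(1)
proof (induction d)
  case 0
  have "product_group {s-0..s} (\<lambda>k. integer_mod_group (m k))
       = product_group {s-0..s} (\<lambda>k. integer_mod_group (cseq m s (s-0) k))"
    by (rule product_group_cong) (auto simp: cseq_def)
  then show ?case using iso_refl' by metis
next
  case (Suc d)
  let ?Z = integer_mod_group
  define j where "j = s - d"
  define i where "i = s - Suc d"
  have ij: "j = Suc i" "1 \<le> i" "j \<le> s" using Suc.prems unfolding i_def j_def by auto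
  have IH: "product_group {j..s} (\<lambda>k. ?Z (m k)) \<cong> product_group {j..s} (\<lambda>k. ?Z (cseq m s j k))"
    using Suc j_def by simp
  define G where "G = Gcd (m ` {j..s})"
  define P' where "P' = product_group {Suc j..s} (\<lambda>k. ?Z (cseq m s j k))"
  have Ii: "{i..s} = insert i {j..s}" "i \<notin> {j..s}" using ij by auto
  have Ij: "{j..s} = insert j {Suc j..s}" "j \<notin> {Suc j..s}" using ij by auto
  have mpos: "m i > 0" using ij assms(2) by auto
  have mj: "m j \<in> m ` {j..s}" "m j \<noteq> 0" using ij assms(2) by auto
  have Gpos: "G > 0" unfolding G_def using mj
    by (metis Gcd_0_iff bot_nat_0.not_eq_extremum singletonD subsetD)
  have gP': "group P'" unfolding P'_def by simp
  have "product_group {i..s} (\<lambda>k. ?Z (m k)) \<cong> ?Z (m i) \<times>\<times> product_group {j..s} (\<lambda>k. ?Z (m k))"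
    unfolding Ii(1) by (rule split_iso) (use Ii in auto)
  also have "\<dots> \<cong> ?Z (m i) \<times>\<times> product_group {j..s} (\<lambda>k. ?Z (cseq m s j k))"
    by (rule dp_iso) (auto simp: iso_refl' IH)
  also have "\<dots> \<cong> ?Z (m i) \<times>\<times> (?Z G \<times>\<times> P')"
  proof (rule dp_iso)
    show "product_group {j..s} (\<lambda>k. ?Z (cseq m s j k)) \<cong> ?Z G \<times>\<times> P'"
    proof -
      have cj: "cseq m s j j = G" by (simp add: cseq_def G_def)
      have "product_group {j..s} (\<lambda>k. ?Z (cseq m s j k)) \<cong> ?Z (cseq m s j j) \<times>\<times> P'"
        unfolding P'_def by (subst Ij(1), rule split_iso) (use Ij in auto)
      then show ?thesis using cj by simp
    qed
  qed (auto simp: iso_refl')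
  also have "\<dots> \<cong> (?Z (m i) \<times>\<times> ?Z G) \<times>\<times> P'"
    by (rule assoc_iso') (auto simp: gP')
  also have "\<dots> \<cong> (?Z (gcd (m i) G) \<times>\<times> ?Z (lcm (m i) G)) \<times>\<times> P'"
    by (rule dp_iso) (auto simp: iso_refl' gcd_lcm_iso mpos Gpos DirProd_group)
  also have "\<dots> \<cong> ?Z (gcd (m i) G) \<times>\<times> (?Z (lcm (m i) G) \<times>\<times> P')"
    by (rule assoc_iso)
  also have "\<dots> \<cong> ?Z (gcd (m i) G) \<times>\<times> product_group {j..s} (\<lambda>k. ?Z (cseq m s i k))"
  proof (rule dp_iso)
    have eq: "P' = product_group {Suc j..s} (\<lambda>k. ?Z (cseq m s i k))"
      unfolding P'_def by (rule product_group_cong) (use ij in \<open>auto simp: cseq_def\<close>)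
    have l: "lcm (m i) G = cseq m s i j"
    proof (cases "j = s")
      case True
      then have "i = s - 1" using ij by simp
      then show ?thesis using ij True by (simp add: cseq_def a_seq_def G_def)
    next
      case False
      then show ?thesis using ij by (simp add: cseq_def a_seq_def G_def)
    qed
    have h: "product_group {j..s} (\<lambda>k. ?Z (cseq m s i k)) \<cong> ?Z (lcm (m i) G) \<times>\<times> P'"
      unfolding Ij(1) eq l by (rule split_iso) (use Ij in auto)
    have grp: "group (product_group {j..s} (\<lambda>k. ?Z (cseq m s i k)))" by simp
    show "?Z (lcm (m i) G) \<times>\<times> P' \<cong> product_group {j..s} (\<lambda>k. ?Z (cseq m s i k))"
      by (rule group.iso_sym[OF grp h])
  qed (auto simp: iso_refl')
  also have "\<dots> \<cong> product_group {i..s} (\<lambda>k. ?Z (cseq m s i k))"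
  proof -
    have g: "gcd (m i) G = cseq m s i i" unfolding cseq_def G_def Ii(1) by simp
    have h2: "product_group {i..s} (\<lambda>k. ?Z (cseq m s i k)) \<cong> ?Z (gcd (m i) G) \<times>\<times> product_group {j..s} (\<lambda>k. ?Z (cseq m s i k))"
      unfolding g Ii(1) by (rule split_iso) (use Ii in auto)
    have grp: "group (product_group {i..s} (\<lambda>k. ?Z (cseq m s i k)))" by simp
    show ?thesis by (rule group.iso_sym[OF grp h2])
  qed
  finally show ?case by (simp only: i_def)
qed

theorem proposition1:
  fixes m :: "nat \<Rightarrow> nat" and s :: nat
  assumes "s \<ge> 1" and "\<And>k. k \<in> {1..s} \<Longrightarrow> m k > 0"
  shows "product_group {1..s} (\<lambda>k. integer_mod_group (m k))
         \<cong> product_group {1..s} (\<lambda>k. integer_mod_group (a_seq m s k))"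
proof -
  have "s - (s - 1) = 1" using assms by simp
  then have "product_group {1..s} (\<lambda>k. integer_mod_group (m k))
         \<cong> product_group {1..s} (\<lambda>k. integer_mod_group (cseq m s 1 k))"
    using tail[of "s-1" s m] assms by simp
  moreover have "product_group {1..s} (\<lambda>k. integer_mod_group (cseq m s 1 k))
     = product_group {1..s} (\<lambda>k. integer_mod_group (a_seq m s k))"
    by (rule product_group_cong) (simp add: cseq_def a_seq_def)
  ultimately show ?thesis by simp
qed
end
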